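(* Let $P\in\mathcal{P}$ and suppose $\nu:\mathcal{P}\to\mathcal{H}$ is pathwise differentiable at $P$ and that the local parameter space $\dot{\mathcal{H}}_P$ (the image of $\dot{\nu}_P$, equipped with the inner product of $\mathcal{H}$) is a reproducing kernel Hilbert space of real functions on a set $\mathcal{T}$, with feature map $t\mapsto K_t$. Define $\tilde{\phi}_P$ by $\tilde{\phi}_P(z)(t)=\dot{\nu}_P^*(K_t)(z)$ for $t\in\mathcal{T}$ and $P$-almost every $z$. Then: (i) if $\nu$ has an efficient influence function $\phi_P$ at $P$, then $\phi_P=\tilde{\phi}_P$ $P$-almost surely; (ii) if $\|\tilde{\phi}_P\|_{L^2(P;\mathcal{H})}<\infty$ (i.e. $\tilde\phi_P\in L^2(P;\mathcal H)$), then $\nu$ has an efficient influence function at $P$.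
   Context: Let $(\mathcal{Z},\mathbf{B})$ be a Polish space and $\mathcal{P}$ a set of probability distributions on it (the model), all dominated by a $\sigma$-finite measure $\lambda$. For $P\in\mathcal{P}$ and $s\in L^2(P)$, a submodel $\{P_\epsilon:\epsilon\in[0,\delta)\}\subset\mathcal{P}$ is quadratic mean differentiable at $P$ with score $s$ if $\|p_\epsilon^{1/2}-p^{1/2}-\epsilon s p^{1/2}/2\|_{L^2(\lambda)}=o(\epsilon)$ as $\epsilon\to0$, where $p_\epsilon=dP_\epsilon/d\lambda$, $p=dP/d\lambda$; $\mathscr{P}(P,\mathcal{P},s)$ denotes the set of such submodels. The tangent set at $P$ is $\{s\in L^2(P):\mathscr{P}(P,\mathcal{P},s)\neq\emptyset\}$ and the tangent space $\dot{\mathcal{P}}_P$ is its closed linear span in $L^2(P)$. $\mathcal{H}$ is a real separable Hilbert space. $\nu:\mathcal{P}\to\mathcal{H}$ is pathwise differentiable at $P$ if there is a continuous linear operator $\dot{\nu}_P:\dot{\mathcal{P}}_P\to\mathcal{H}$ (the local parameter) such that for every $s$ in the tangent set and every submodel in $\mathscr{P}(P,\mathcal{P},s)$, $\|\nu(P_\epsilon)-\nu(P)-\epsilon\dot{\nu}_P(s)\|_{\mathcal{H}}=o(\epsilon)$. Its Hilbert adjoint $\dot{\nu}_P^*:\mathcal{H}\to\dot{\mathcal{P}}_P$ is the efficient influence operator. Pointwise values $\dot{\nu}_P^*(h)(z)$ are taken from versions chosen so that $\{\dot{\nu}_P^*(h):h\in\mathcal{H}\}$ is a separable process: there exist a countable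 dense $\mathcal{H}'\subset\mathcal{H}$ and a $P$-probability-one set $\mathcal{Z}'$ such that for all $h\in\mathcal{H}$, $z\in\mathcal{Z}'$ there is a sequence $h_j\in\mathcal{H}'$ with $h_j\to h$ and $\dot{\nu}_P^*(h_j)(z)\to\dot{\nu}_P^*(h)(z)$. $\nu$ has efficient influence function (EIF) $\phi_P:\mathcal{Z}\to\mathcal{H}$ at $P$ if there is a $P$-probability-one set $\mathcal{Z}'$ with $\dot{\nu}_P^*(h)(z)=\langle h,\phi_P(z)\rangle_{\mathcal{H}}$ for all $h\in\mathcal{H}$, $z\in\mathcal{Z}'$. $L^2(P;\mathcal{H})$ is the space of Bochner measurable $f:\mathcal{Z}\to\mathcal{H}$ with $\|f\|_{L^2(P;\mathcal{H})}^2=\int\|f(z)\|_{\mathcal{H}}^2P(dz)<\infty$. *)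

theory Defs
  imports "HOL-Probability.Probability"
begin

text \<open>Square-integrable real functions w.r.t. a measure (elements of L2(P) given by representatives).\<close>
definition L2 :: "'z measure \<Rightarrow> ('z \<Rightarrow> real) set" where
  "L2 M = {f. f \<in> borel_measurable M \<and> integrable M (\<lambda>z. (f z)^2)}"

definition L2_norm :: "'z measure \<Rightarrow> ('z \<Rightarrow> real) \<Rightarrow> real" where
  "L2_norm M f = sqrt (\<integral>z. (f z)^2 \<partial>M)"

definition QMD_submodels ::
  "'z measure \<Rightarrow> 'z measure set \<Rightarrow> 'z measure \<Rightarrow> ('z \<Rightarrow> real) \<Rightarrow> (real \<Rightarrow> 'z measure) set" where
  "QMD_submodels lam model P s =
    {Pe. (\<exists>\<delta>>0. \<forall>\<epsilon>\<in>{0..<\<delta>}. Pe \<epsilon> \<in> model) \<and>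
      ((\<lambda>\<epsilon>. (\<integral>\<^sup>+ z. ennreal ((sqrt (enn2real (RN_deriv lam (Pe \<epsilon>) z))
               - sqrt (enn2real (RN_deriv lam P z))
               - \<epsilon> * s z * sqrt (enn2real (RN_deriv lam P z)) / 2)^2) \<partial>lam)
             / ennreal (\<epsilon>^2)) \<longlongrightarrow> 0) (at_right 0)}"

definition tangent_set :: "'z measure \<Rightarrow> 'z measure set \<Rightarrow> 'z measure \<Rightarrow> ('z \<Rightarrow> real) set" where
  "tangent_set lam model P = {s \<in> L2 P. QMD_submodels lam model P s \<noteq> {}}"

definition lin_span :: "('z \<Rightarrow> real) set \<Rightarrow> ('z \<Rightarrow> real) set" where
  "lin_span S = {(\<lambda>z. \<Sum>i<n. (c::nat \<Rightarrow> real) i * f i z) | n c f. \<forall>i<(n::nat). f i \<in> S}"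

definition tangent_space :: "'z measure \<Rightarrow> 'z measure set \<Rightarrow> 'z measure \<Rightarrow> ('z \<Rightarrow> real) set" where
  "tangent_space lam model P =
    {f \<in> L2 P. \<forall>e>0. \<exists>g\<in>lin_span (tangent_set lam model P). L2_norm P (\<lambda>z. f z - g z) < e}"

definition pathwise_differentiable ::
  "'z measure \<Rightarrow> 'z measure set \<Rightarrow> 'z measure \<Rightarrow> ('z measure \<Rightarrow> 'h::real_normed_vector)
    \<Rightarrow> (('z \<Rightarrow> real) \<Rightarrow> 'h) \<Rightarrow> bool" where
  "pathwise_differentiable lam model P nu dotnu \<longleftrightarrow>
    (\<forall>f g a b. f \<in> tangent_space lam model P \<longrightarrow> g \<in> tangent_space lam model P \<longrightarrow>
        dotnu (\<lambda>z. a * f z + b * g z) = a *\<^sub>R dotnu f + b *\<^sub>R dotnu g) \<and>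
    (\<exists>C. \<forall>f\<in>tangent_space lam model P. norm (dotnu f) \<le> C * L2_norm P f) \<and>
    (\<forall>s\<in>tangent_set lam model P. \<forall>Pe\<in>QMD_submodels lam model P s.
        ((\<lambda>\<epsilon>. norm (nu (Pe \<epsilon>) - nu P - \<epsilon> *\<^sub>R dotnu s) / \<epsilon>) \<longlongrightarrow> 0) (at_right 0))"

text \<open>dotnu_star is (a choice of versions of) the Hilbert adjoint of dotnu.\<close>
definition is_adjoint ::
  "'z measure \<Rightarrow> ('z \<Rightarrow> real) set \<Rightarrow> (('z \<Rightarrow> real) \<Rightarrow> 'h::real_inner) \<Rightarrow> ('h \<Rightarrow> 'z \<Rightarrow> real) \<Rightarrow> bool" where
  "is_adjoint P TS dotnu dotnu_star \<longleftrightarrow>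
    (\<forall>h. dotnu_star h \<in> TS) \<and>
    (\<forall>h. \<forall>s\<in>TS. inner (dotnu s) h = (\<integral>z. s z * dotnu_star h z \<partial>P))"

definition separable_process :: "'z measure \<Rightarrow> ('h::real_normed_vector \<Rightarrow> 'z \<Rightarrow> real) \<Rightarrow> bool" where
  "separable_process P X \<longleftrightarrow>
    (\<exists>H'. countable H' \<and> closure H' = UNIV \<and>
      (AE z in P. \<forall>h. \<exists>hs. (\<forall>j. hs j \<in> H') \<and> hs \<longlonglongrightarrow> h \<and> (\<lambda>j. X (hs j) z) \<longlonglongrightarrow> X h z))"

definition has_EIF :: "'z measure \<Rightarrow> ('h::real_inner \<Rightarrow> 'z \<Rightarrow> real) \<Rightarrow> ('z \<Rightarrow> 'h) \<Rightarrow> bool" where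
  "has_EIF P dotnu_star \<phi> \<longleftrightarrow> (AE z in P. \<forall>h. dotnu_star h z = inner h (\<phi> z))"

text \<open>The subspace Hd of H, with the inner product of H, is an RKHS of real functions on 'T:
  evf identifies each element with a function on 'T (linearly and injectively), Hd is complete
  (closed in H), and K t is the feature map (reproducing property).\<close>
definition is_RKHS :: "'h::real_inner set \<Rightarrow> ('h \<Rightarrow> 'T \<Rightarrow> real) \<Rightarrow> ('T \<Rightarrow> 'h) \<Rightarrow> bool" where
  "is_RKHS Hd evf K \<longleftrightarrow>
    subspace Hd \<and> closed Hd \<and> inj_on evf Hd \<and>
    (\<forall>a b x y. x \<in> Hd \<longrightarrow> y \<in> Hd \<longrightarrow> evf (a *\<^sub>R x + b *\<^sub>R y) = (\<lambda>t. a * evf x t + b * evf y t)) \<and>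
    (\<forall>t. K t \<in> Hd) \<and>
    (\<forall>t. \<forall>h\<in>Hd. inner (K t) h = evf h t)"

end

theory Submission
  imports Defs
begin

lemma norm_diff_sq:
  fixes a b :: "'a::real_inner"
  shows "(norm (a - b))^2 = (norm a)^2 - 2 * inner a b + (norm b)^2"
  by (simp add: power2_norm_eq_inner inner_diff_left inner_diff_right inner_commute[of b a])

lemma norm_add_sq:
  fixes a b :: "'a::real_inner"
  shows "(norm (a + b))^2 = (norm a)^2 + 2 * inner a b + (norm b)^2"
  by (simp add: power2_norm_eq_inner inner_add_left inner_add_right inner_commute[of b a])

lemma parallelogram_aux:
  fixes a b :: "'a::real_inner"
  shows "(norm (a - b))^2 = 2*(norm a)^2 + 2*(norm b)^2 - 4*(norm ((1/2) *\<^sub>R (a + b)))^2"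
proof -
  have "(norm ((1/2) *\<^sub>R (a + b)))^2 = (1/4) * (norm (a + b))^2"
    by (simp add: power_mult_distrib power2_eq_square)
  then show ?thesis using norm_diff_sq[of a b] norm_add_sq[of a b] by simp
qed

lemma proj_exists:
  fixes S :: "'a::{real_inner, complete_space} set" and x :: 'a
  assumes S: "subspace S" "closed S"
  shows "\<exists>p\<in>S. \<forall>s\<in>S. inner (x - p) s = 0"
proof -
  have S0: "0 \<in> S" using S(1) by (simp add: subspace_0)
  define d where "d = Inf (dist x ` S)"
  have bdd: "bdd_below (dist x ` S)" by (auto intro: bdd_belowI[of _ 0])
  have low: "\<And>z. z \<in> S \<Longrightarrow> d \<le> dist x z"
    unfolding d_def using bdd by (auto intro: cInf_lower)
  have d0: "0 \<le> d" using low[OF S0] unfolding d_def using S0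
    by (auto intro!: cInf_greatest)
  have "\<forall>n. \<exists>y\<in>S. dist x y < d + 1 / Suc n"
  proof
    fix n
    have "Inf (dist x ` S) < d + 1 / Suc n" unfolding d_def by simp
    then obtain v where "v \<in> dist x ` S" "v < d + 1 / Suc n"
      using S0 by (subst (asm) cInf_less_iff) (auto simp: bdd)
    then show "\<exists>y\<in>S. dist x y < d + 1 / Suc n" by auto
  qed
  then obtain y where y: "\<And>n. y n \<in> S" "\<And>n. dist x (y n) < d + 1 / Suc n"
    by metis
  have key: "(norm (y m - y n))^2 \<le> 2*(2*d+1)/Suc m + 2*(2*d+1)/Suc n" for m n
  proof -
    have mid: "(1/2) *\<^sub>R (y m + y n) \<in> S"
      using S(1) y(1) by (simp add: subspace_add subspace_mul)
    have e: "(norm (y m - y n))^2 = 2*(norm (x - y m))^2 + 2*(norm (x - y n))^2 - 4*(norm (x - (1/2) *\<^sub>R (y m + y n)))^2"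
    proof -
      have h1: "y m - y n = (x - y n) - (x - y m)" by simp
      have h2: "x - (1/2) *\<^sub>R (y m + y n) = (1/2) *\<^sub>R ((x - y n) + (x - y m))"
      proof -
        have "(1/2) *\<^sub>R ((x - y n) + (x - y m)) = (1/2) *\<^sub>R (2 *\<^sub>R x) - (1/2) *\<^sub>R (y m + y n)"
          by (simp add: algebra_simps scaleR_2)
        then show ?thesis by simp
      qed
      show ?thesis unfolding h1 h2 using parallelogram_aux[of "x - y n" "x - y m"] by linarith
    qed
    have l: "d \<le> norm (x - (1/2) *\<^sub>R (y m + y n))" using low[OF mid] by (simp add: dist_norm)
    have dd: "d^2 \<le> (norm (x - (1/2) *\<^sub>R (y m + y n)))^2" using l d0 by (simp add: power_mono)
    have sq: "(norm (x - y k))^2 \<le> d^2 + (2*d+1)/Suc k" for k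
    proof -
      have a: "norm (x - y k) \<le> d + 1/Suc k" using y(2)[of k] by (simp add: dist_norm)
      have "(norm (x - y k))^2 \<le> (d + 1/Suc k)^2" using a by (simp add: power_mono)
      also have "\<dots> = d^2 + 2*d/Suc k + 1/Suc k * (1/Suc k)" by (simp add: power2_eq_square algebra_simps)
      also have "\<dots> \<le> d^2 + 2*d/Suc k + 1/Suc k"
        by (intro add_left_mono mult_left_le) (auto simp: field_simps)
      also have "\<dots> = d^2 + (2*d+1)/Suc k" by (simp add: add_divide_distrib)
      finally show ?thesis .
    qed
    show ?thesis using e sq[of m] sq[of n] dd by linarith
  qed
  have "Cauchy y"
  proof (rule metric_CauchyI)
    fix e :: real assume e: "0 < e"
    obtain N :: nat where N: "4*(2*d+1)/e^2 < N" using reals_Archimedean2 by blast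
    have "\<forall>m\<ge>N. \<forall>n\<ge>N. dist (y m) (y n) < e"
    proof (intro allI impI)
      fix m n assume mn: "N \<le> m" "N \<le> n"
      have p: "0 < 2*d+1" using d0 by simp
      have "2*(2*d+1)/Suc k < e^2/2" if "N \<le> k" for k
      proof -
        have "4*(2*d+1) < real N * e^2" using N e by (simp add: field_simps)
        also have "\<dots> \<le> real (Suc k) * e^2" using that e by (intro mult_right_mono) auto
        finally show ?thesis by (simp add: field_simps)
      qed
      then have "2*(2*d+1)/Suc m < e^2/2" "2*(2*d+1)/Suc n < e^2/2" using mn by auto
      then have "(norm (y m - y n))^2 < e^2" using key[of m n] by linarith
      then show "dist (y m) (y n) < e" using e by (simp add: dist_norm power_less_imp_less_base)
    qed
    then show "\<exists>M. \<forall>m\<ge>M. \<forall>n\<ge>M. dist (y m) (y n) < e" by blast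
  qed
  then obtain p where p: "y \<longlonglongrightarrow> p" using Cauchy_convergent convergent_def by blast
  have pS: "p \<in> S" using closed_sequentially[OF S(2) y(1) p] .
  have "dist x p \<le> d"
  proof (rule LIMSEQ_le[of "\<lambda>n. dist x (y n)" _ "\<lambda>n. d + 1 / Suc n"])
    show "(\<lambda>n. dist x (y n)) \<longlonglongrightarrow> dist x p" by (intro tendsto_intros p)
    show "(\<lambda>n. d + 1 / real (Suc n)) \<longlonglongrightarrow> d"
      using tendsto_add[OF tendsto_const LIMSEQ_inverse_real_of_nat] by (simp add: inverse_eq_divide)
    show "\<exists>N. \<forall>n\<ge>N. dist x (y n) \<le> d + 1 / real (Suc n)" using y(2) less_imp_le by blast
  qed
  then have dp: "norm (x - p) \<le> d" by (simp add: dist_norm)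
  show ?thesis
  proof (intro bexI[OF _ pS] ballI)
    fix s assume s: "s \<in> S"
    define c where "c = inner (x - p) s"
    define t where "t = c / ((norm s)^2 + 1)"
    have "p + t *\<^sub>R s \<in> S" using S(1) pS s by (simp add: subspace_add subspace_mul)
    then have "d \<le> norm (x - (p + t *\<^sub>R s))" using low by (simp add: dist_norm)
    moreover have "x - (p + t *\<^sub>R s) = (x - p) - t *\<^sub>R s" by (simp add: algebra_simps)
    ultimately have "norm (x - p) \<le> norm ((x - p) - t *\<^sub>R s)" using dp by simp
    then have "(norm (x - p))^2 \<le> (norm ((x - p) - t *\<^sub>R s))^2"
      by (intro power_mono) auto
    also have "\<dots> = (norm (x - p))^2 - 2 * t * c + t^2 * (norm s)^2"
      unfolding norm_diff_sq by (simp add: c_def power_mult_distrib)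
    finally have a: "2 * t * c \<le> t^2 * (norm s)^2" by simp
    define q where "q = (norm s)^2 + 1"
    have pos: "0 < q" unfolding q_def by (simp add: add_nonneg_pos)
    have "2 * c^2 * q \<le> c^2 * (norm s)^2"
    proof -
      have "(2 * t * c) * q^2 \<le> (t^2 * (norm s)^2) * q^2"
        using a pos by (intro mult_right_mono) auto
      moreover have "(2 * t * c) * q^2 = 2 * c^2 * q" unfolding t_def q_def[symmetric]
        using pos by (simp add: power2_eq_square field_simps)
      moreover have "(t^2 * (norm s)^2) * q^2 = c^2 * (norm s)^2" unfolding t_def q_def[symmetric]
        using pos by (simp add: power2_eq_square field_simps)
      ultimately show ?thesis by simp
    qed
    then have "c^2 * ((norm s)^2 + 2) \<le> 0" unfolding q_def by (simp add: algebra_simps)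
    moreover have "0 < (norm s)^2 + 2" by (simp add: add_nonneg_pos)
    ultimately have "c^2 \<le> 0" by (simp add: mult_le_0_iff)
    then show "inner (x - p) s = 0" unfolding c_def by simp
  qed
qed

lemma sq_sum_le: "((x::real) + y)^2 \<le> 2*x^2 + 2*y^2"
proof -
  have "0 \<le> (x - y)^2" by simp
  then show ?thesis by (simp add: power2_eq_square algebra_simps)
qed

lemma abs_prod_le: "\<bar>(x::real) * y\<bar> \<le> x^2 + y^2"
proof -
  have "0 \<le> (\<bar>x\<bar> - \<bar>y\<bar>)^2" by simp
  then have "2 * (\<bar>x\<bar> * \<bar>y\<bar>) \<le> x^2 + y^2" by (simp add: power2_eq_square algebra_simps)
  moreover have "0 \<le> \<bar>x\<bar> * \<bar>y\<bar>" by simp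
  ultimately show ?thesis using abs_mult[of x y] by linarith
qed

lemma L2_lin:
  assumes "f \<in> L2 M" "g \<in> L2 M"
  shows "(\<lambda>z. a * f z + b * g z) \<in> L2 M"
proof -
  have [measurable]: "f \<in> borel_measurable M" "g \<in> borel_measurable M"
    and i: "integrable M (\<lambda>z. (f z)^2)" "integrable M (\<lambda>z. (g z)^2)"
    using assms by (auto simp: L2_def)
  have "integrable M (\<lambda>z. (a * f z + b * g z)^2)"
  proof (rule Bochner_Integration.integrable_bound)
    show "integrable M (\<lambda>z. 2 * a^2 * (f z)^2 + 2 * b^2 * (g z)^2)"
      by (intro Bochner_Integration.integrable_add integrable_mult_right i)
    show "(\<lambda>z. (a * f z + b * g z)^2) \<in> borel_measurable M" by measurable
    show "AE z in M. norm ((a * f z + b * g z)^2) \<le> norm (2 * a^2 * (f z)^2 + 2 * b^2 * (g z)^2)"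
    proof (intro AE_I2)
      fix z
      have "(a * f z + b * g z)^2 \<le> 2 * a^2 * (f z)^2 + 2 * b^2 * (g z)^2"
        using sq_sum_le[of "a * f z" "b * g z"] by (simp add: power_mult_distrib)
      moreover have "0 \<le> 2 * a^2 * (f z)^2 + 2 * b^2 * (g z)^2" by simp
      ultimately show "norm ((a * f z + b * g z)^2) \<le> norm (2 * a^2 * (f z)^2 + 2 * b^2 * (g z)^2)"
        by simp
    qed
  qed
  then show ?thesis unfolding L2_def by auto
qed

lemma L2_prod_int:
  assumes "f \<in> L2 M" "g \<in> L2 M"
  shows "integrable M (\<lambda>z. f z * g z)"
proof -
  have [measurable]: "f \<in> borel_measurable M" "g \<in> borel_measurable M"
    and i: "integrable M (\<lambda>z. (f z)^2)" "integrable M (\<lambda>z. (g z)^2)"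
    using assms by (auto simp: L2_def)
  show ?thesis
  proof (rule Bochner_Integration.integrable_bound)
    show "integrable M (\<lambda>z. (f z)^2 + (g z)^2)"
      by (intro Bochner_Integration.integrable_add i)
    show "(\<lambda>z. f z * g z) \<in> borel_measurable M" by measurable
    show "AE z in M. norm (f z * g z) \<le> norm ((f z)^2 + (g z)^2)"
      using abs_prod_le by auto
  qed
qed

lemma L2_ip_lin:
  assumes "f \<in> L2 M" "g \<in> L2 M" "h \<in> L2 M"
  shows "(\<integral>z. (a * f z + b * g z) * h z \<partial>M) = a * (\<integral>z. f z * h z \<partial>M) + b * (\<integral>z. g z * h z \<partial>M)"
proof -
  have i: "integrable M (\<lambda>z. f z * h z)" "integrable M (\<lambda>z. g z * h z)"
    using assms L2_prod_int by blast+
  have "(\<integral>z. (a * f z + b * g z) * h z \<partial>M) = (\<integral>z. a * (f z * h z) + b * (g z * h z) \<partial>M)"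
    by (simp add: algebra_simps)
  also have "\<dots> = (\<integral>z. a * (f z * h z) \<partial>M) + (\<integral>z. b * (g z * h z) \<partial>M)"
    using i by (intro Bochner_Integration.integral_add) auto
  also have "\<dots> = a * (\<integral>z. f z * h z \<partial>M) + b * (\<integral>z. g z * h z \<partial>M)" by simp
  finally show ?thesis .
qed

lemma L2_zero:
  assumes "f \<in> L2 M" "(\<integral>z. (f z)^2 \<partial>M) = 0"
  shows "AE z in M. f z = 0"
proof -
  have "integrable M (\<lambda>z. (f z)^2)" using assms by (auto simp: L2_def)
  moreover have "AE z in M. 0 \<le> (f z)^2" by simp
  ultimately have "AE z in M. (f z)^2 = 0" using assms(2) integral_nonneg_eq_0_iff_AE by blast
  then show ?thesis by auto
qed

lemma dense_orth_zero:
  fixes y :: "'a::real_inner"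
  assumes D: "\<And>X. open X \<Longrightarrow> X \<noteq> {} \<Longrightarrow> \<exists>d\<in>D. d \<in> X" and o: "\<forall>d\<in>D. inner d y = 0"
  shows "y = 0"
proof (rule ccontr)
  assume "y \<noteq> 0"
  let ?X = "{d. 0 < inner d y}"
  have "open ?X" by (intro open_Collect_less continuous_intros)
  moreover have "y \<in> ?X" using \<open>y \<noteq> 0\<close> by simp
  ultimately obtain d where "d \<in> D" "d \<in> ?X" using D by blast
  then show False using o by auto
qed

theorem theorem1:
  fixes lam :: "'z::polish_space measure"
    and model :: "'z measure set"
    and P :: "'z measure"
    and nu :: "'z measure \<Rightarrow> 'h::{real_inner, polish_space}"
    and dotnu :: "('z \<Rightarrow> real) \<Rightarrow> 'h"
    and dotnu_star :: "'h \<Rightarrow> 'z \<Rightarrow> real"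
    and evf :: "'h \<Rightarrow> 'T \<Rightarrow> real"
    and K :: "'T \<Rightarrow> 'h"
  assumes "sigma_finite_measure lam" and "sets lam = sets borel"
    and "\<forall>Q\<in>model. prob_space Q \<and> sets Q = sets borel \<and> absolutely_continuous lam Q"
    and "P \<in> model"
    and "pathwise_differentiable lam model P nu dotnu"
    and "is_adjoint P (tangent_space lam model P) dotnu dotnu_star"
    and "separable_process P dotnu_star"
    and "is_RKHS (dotnu ` tangent_space lam model P) evf K"
  shows "(\<forall>\<phi>. has_EIF P dotnu_star \<phi> \<longrightarrow>
            (AE z in P. \<phi> z \<in> dotnu ` tangent_space lam model P \<and>
                        evf (\<phi> z) = (\<lambda>t. dotnu_star (K t) z)))
       \<and> ((\<exists>g. g \<in> borel_measurable P \<and> integrable P (\<lambda>z. (norm (g z))^2) \<and>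
             (AE z in P. g z \<in> dotnu ` tangent_space lam model P \<and>
                         evf (g z) = (\<lambda>t. dotnu_star (K t) z)))
          \<longrightarrow> (\<exists>\<phi>. has_EIF P dotnu_star \<phi>))"
proof -
  note assms_all = assms
  define TS where "TS = tangent_space lam model P"
  define Hd where "Hd = dotnu ` TS"
  define star where "star = dotnu_star"
  have sP: "sets P = sets borel" and probP: "prob_space P" using assms(3,4) by auto
  have adjTS: "\<And>h. star h \<in> TS"
    and adjI: "\<And>h s. s \<in> TS \<Longrightarrow> inner (dotnu s) h = (\<integral>z. s z * star h z \<partial>P)"
    using assms(6) unfolding is_adjoint_def TS_def star_def by auto
  have TSL2: "\<And>f. f \<in> TS \<Longrightarrow> f \<in> L2 P" unfolding TS_def tangent_space_def by auto
  have starL2: "\<And>h. star h \<in> L2 P" using adjTS TSL2 by blast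
  have sq: "\<And>k. (\<integral>z. (star k z)^2 \<partial>P) = inner (dotnu (star k)) k"
    using adjI[OF adjTS] by (simp add: power2_eq_square)
  have RK: "subspace Hd" "closed Hd" "inj_on evf Hd"
    "\<And>a b x y. x \<in> Hd \<Longrightarrow> y \<in> Hd \<Longrightarrow> evf (a *\<^sub>R x + b *\<^sub>R y) = (\<lambda>t. a * evf x t + b * evf y t)"
    "\<And>t. K t \<in> Hd" "\<And>t h. h \<in> Hd \<Longrightarrow> inner (K t) h = evf h t"
    using assms(8) unfolding is_RKHS_def Hd_def TS_def by auto
  have star_zero: "AE z in P. star k z = 0" if k: "\<And>x. x \<in> Hd \<Longrightarrow> inner x k = 0" for k
  proof -
    have "dotnu (star k) \<in> Hd" unfolding Hd_def using adjTS by blast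
    then have "(\<integral>z. (star k z)^2 \<partial>P) = 0" using sq k by simp
    then show ?thesis using L2_zero starL2 by blast
  qed
  have lin: "AE z in P. star (a *\<^sub>R h + b *\<^sub>R k) z = a * star h z + b * star k z" for a b h k
  proof -
    define u where "u = star (a *\<^sub>R h + b *\<^sub>R k)"
    define w where "w = (\<lambda>z. a * star h z + b * star k z)"
    define d where "d = (\<lambda>z. 1 * u z + (-1) * w z)"
    have uL: "u \<in> L2 P" unfolding u_def by (rule starL2)
    have wL: "w \<in> L2 P" unfolding w_def by (intro L2_lin starL2)
    have dL: "d \<in> L2 P" unfolding d_def by (intro L2_lin uL wL)
    have orth: "(\<integral>z. s z * d z \<partial>P) = 0" if s: "s \<in> TS" for s
    proof -
      have sL: "s \<in> L2 P" using TSL2 s by blast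
      have "(\<integral>z. s z * d z \<partial>P) = (\<integral>z. d z * s z \<partial>P)" by (simp add: mult.commute)
      also have "\<dots> = 1 * (\<integral>z. u z * s z \<partial>P) + (-1) * (\<integral>z. w z * s z \<partial>P)"
        unfolding d_def by (rule L2_ip_lin[OF uL wL sL])
      also have "(\<integral>z. w z * s z \<partial>P) = a * (\<integral>z. star h z * s z \<partial>P) + b * (\<integral>z. star k z * s z \<partial>P)"
        unfolding w_def by (rule L2_ip_lin[OF starL2 starL2 sL])
      also have "(\<integral>z. star h z * s z \<partial>P) = inner (dotnu s) h" using adjI[OF s] by (simp add: mult.commute)
      also have "(\<integral>z. star k z * s z \<partial>P) = inner (dotnu s) k" using adjI[OF s] by (simp add: mult.commute)
      also have "(\<integral>z. u z * s z \<partial>P) = inner (dotnu s) (a *\<^sub>R h + b *\<^sub>R k)"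
        using adjI[OF s] unfolding u_def by (simp add: mult.commute)
      finally show ?thesis by (simp add: inner_add_right)
    qed
    have "(\<integral>z. (d z)^2 \<partial>P) = (\<integral>z. d z * d z \<partial>P)" by (simp add: power2_eq_square)
    also have "\<dots> = (\<integral>z. (1 * u z + (-1) * w z) * d z \<partial>P)" unfolding d_def ..
    also have "\<dots> = 1 * (\<integral>z. u z * d z \<partial>P) + (-1) * (\<integral>z. w z * d z \<partial>P)"
      by (rule L2_ip_lin[OF uL wL dL])
    also have "(\<integral>z. w z * d z \<partial>P) = a * (\<integral>z. star h z * d z \<partial>P) + b * (\<integral>z. star k z * d z \<partial>P)"
      unfolding w_def by (rule L2_ip_lin[OF starL2 starL2 dL])
    also have "(\<integral>z. u z * d z \<partial>P) = 0" unfolding u_def by (rule orth[OF adjTS])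
    also have "(\<integral>z. star h z * d z \<partial>P) = 0" by (rule orth[OF adjTS])
    also have "(\<integral>z. star k z * d z \<partial>P) = 0" by (rule orth[OF adjTS])
    finally have "(\<integral>z. (d z)^2 \<partial>P) = 0" by simp
    then have "AE z in P. d z = 0" using L2_zero dL by blast
    then show ?thesis unfolding d_def u_def w_def by eventually_elim simp
  qed
  obtain C0 where C0: "\<And>f. f \<in> TS \<Longrightarrow> norm (dotnu f) \<le> C0 * L2_norm P f"
    using assms(5) unfolding pathwise_differentiable_def TS_def by blast
  have bound: "(\<integral>z. (star k z)^2 \<partial>P) \<le> C0^2 * (norm k)^2" for k
  proof -
    define I where "I = (\<integral>z. (star k z)^2 \<partial>P)"
    define N where "N = sqrt I"
    have I0: "0 \<le> I" unfolding I_def by simp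
    have NN: "N^2 = I" "0 \<le> N" unfolding N_def using I0 by auto
    have "I = inner (dotnu (star k)) k" unfolding I_def by (rule sq)
    also have "\<dots> \<le> norm (dotnu (star k)) * norm k" by (rule norm_cauchy_schwarz)
    also have "\<dots> \<le> (C0 * N) * norm k"
      using C0[OF adjTS] unfolding N_def I_def L2_norm_def by (intro mult_right_mono) auto
    finally have a: "N * N \<le> N * (C0 * norm k)" using NN by (simp add: power2_eq_square algebra_simps)
    show ?thesis
    proof (cases "N = 0")
      case True then show ?thesis using NN unfolding I_def by simp
    next
      case False
      then have "N \<le> C0 * norm k" using a NN(2) by (simp add: mult_le_cancel_left)
      then have "N^2 \<le> (C0 * norm k)^2" using NN(2) by (intro power_mono) auto
      then show ?thesis using NN unfolding I_def by (simp add: power_mult_distrib)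
    qed
  qed
  have complete: "\<exists>p\<in>Hd. \<forall>s\<in>Hd. inner (x - p) s = 0" for x using proj_exists[OF RK(1,2)] by blast
  then obtain PH where PH: "\<And>x. PH x \<in> Hd" "\<And>x s. s \<in> Hd \<Longrightarrow> inner (x - PH x) s = 0"
    by metis
  have PHperp: "\<And>x s. s \<in> Hd \<Longrightarrow> inner s (x - PH x) = 0" using PH(2) by (simp add: inner_commute)
  obtain D :: "'h set" where D: "countable D" "\<And>X. open X \<Longrightarrow> X \<noteq> {} \<Longrightarrow> \<exists>d\<in>D. d \<in> X"
    using countable_dense_setE by blast
  have ident: "inner (d - PH d) x = inner d (x - PH x)" for d x
  proof -
    have "inner (d - PH d) x = inner (d - PH d) (PH x) + inner (d - PH d) (x - PH x)"
      by (simp add: inner_diff_right)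
    also have "inner (d - PH d) (PH x) = 0" using PH by blast
    also have "inner d (x - PH x) = inner (PH d) (x - PH x) + inner (d - PH d) (x - PH x)"
      by (simp add: inner_diff_left)
    moreover have "inner (PH d) (x - PH x) = 0" using PHperp PH(1) by blast
    ultimately show ?thesis by simp
  qed
  have inHd: "x \<in> Hd" if x: "\<forall>d\<in>D. inner (d - PH d) x = 0" for x
  proof -
    have "\<forall>d\<in>D. inner d (x - PH x) = 0" using x ident by simp
    then have "x - PH x = 0" using dense_orth_zero[of D "x - PH x"] D(2) by blast
    then show ?thesis using PH(1)[of x] by simp
  qed
  have part1: "\<forall>\<phi>. has_EIF P dotnu_star \<phi> \<longrightarrow>
            (AE z in P. \<phi> z \<in> dotnu ` tangent_space lam model P \<and>
                        evf (\<phi> z) = (\<lambda>t. dotnu_star (K t) z))"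
  proof (intro allI impI)
    fix \<phi> assume "has_EIF P dotnu_star \<phi>"
    then have E: "AE z in P. \<forall>h. star h z = inner h (\<phi> z)" unfolding has_EIF_def star_def .
    have "\<forall>d\<in>D. AE z in P. star (d - PH d) z = 0"
      using star_zero PH(2) by (simp add: inner_commute)
    then have "AE z in P. \<forall>d\<in>D. star (d - PH d) z = 0" by (simp add: AE_ball_countable[OF D(1)])
    then show "AE z in P. \<phi> z \<in> dotnu ` tangent_space lam model P \<and> evf (\<phi> z) = (\<lambda>t. dotnu_star (K t) z)"
      using E
    proof eventually_elim
      case (elim z)
      then have h: "\<phi> z \<in> Hd" by (intro inHd) auto
      moreover have "evf (\<phi> z) = (\<lambda>t. star (K t) z)"
        using elim(2) RK(6)[OF h] by auto
      ultimately show ?case unfolding Hd_def TS_def star_def by auto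
    qed
  qed
  have part2: "(\<exists>g. g \<in> borel_measurable P \<and> integrable P (\<lambda>z. (norm (g z))^2) \<and>
             (AE z in P. g z \<in> dotnu ` tangent_space lam model P \<and>
                         evf (g z) = (\<lambda>t. dotnu_star (K t) z)))
          \<longrightarrow> (\<exists>\<phi>. has_EIF P dotnu_star \<phi>)"
  proof
    assume "\<exists>g. g \<in> borel_measurable P \<and> integrable P (\<lambda>z. (norm (g z))^2) \<and>
             (AE z in P. g z \<in> dotnu ` tangent_space lam model P \<and>
                         evf (g z) = (\<lambda>t. dotnu_star (K t) z))"
    then obtain g where gm[measurable]: "g \<in> borel_measurable P" and gi: "integrable P (\<lambda>z. (norm (g z))^2)"
      and gH: "AE z in P. g z \<in> Hd \<and> evf (g z) = (\<lambda>t. star (K t) z)"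
      unfolding Hd_def TS_def star_def by blast
    have igm: "(\<lambda>z. inner h (g z)) \<in> borel_measurable P" for h
    proof (rule measurable_compose[OF gm])
      show "inner h \<in> borel_measurable borel"
        by (intro borel_measurable_continuous_onI continuous_intros)
    qed
    have igL: "(\<lambda>z. inner h (g z)) \<in> L2 P" for h
    proof -
      have "integrable P (\<lambda>z. (inner h (g z))^2)"
      proof (rule Bochner_Integration.integrable_bound)
        show "integrable P (\<lambda>z. (norm h)^2 * (norm (g z))^2)" by (intro integrable_mult_right gi)
        show "(\<lambda>z. (inner h (g z))^2) \<in> borel_measurable P" using igm by measurable
        show "AE z in P. norm ((inner h (g z))^2) \<le> norm ((norm h)^2 * (norm (g z))^2)"
        proof (intro AE_I2)
          fix z
          have "\<bar>inner h (g z)\<bar> \<le> norm h * norm (g z)" by (rule Cauchy_Schwarz_ineq2)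
          then have "\<bar>inner h (g z)\<bar>^2 \<le> (norm h * norm (g z))^2" by (intro power_mono) auto
          then show "norm ((inner h (g z))^2) \<le> norm ((norm h)^2 * (norm (g z))^2)"
            by (simp add: power_mult_distrib)
        qed
      qed
      then show ?thesis unfolding L2_def using igm by auto
    qed
    define Ig where "Ig = (\<integral>z. (norm (g z))^2 \<partial>P)"
    define G where "G = {h. AE z in P. star h z = inner h (g z)}"
    have Gperp: "k \<in> G" if k: "\<And>x. x \<in> Hd \<Longrightarrow> inner x k = 0" for k
    proof -
      have a: "AE z in P. star k z = 0" using star_zero k by blast
      from a gH show ?thesis unfolding G_def mem_Collect_eq
      proof eventually_elim
        case (elim z)
        then show ?case using k[of "g z"] by (simp add: inner_commute)
      qed
    qed
    have GK: "K t \<in> G" for t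
      using gH unfolding G_def mem_Collect_eq by eventually_elim (auto simp: RK(6))
    have Gsub: "subspace G"
      unfolding subspace_def
    proof (intro conjI ballI allI)
      show "0 \<in> G" using Gperp[of 0] by simp
    next
      fix x y assume "x \<in> G" "y \<in> G"
      then show "x + y \<in> G" using lin[of 1 x 1 y] unfolding G_def mem_Collect_eq
        by eventually_elim (simp add: inner_add_left)
    next
      fix c x assume "x \<in> G"
      then show "c *\<^sub>R x \<in> G" using lin[of c x 0 x] unfolding G_def mem_Collect_eq
        by eventually_elim simp
    qed
    have Gcl: "closed G"
      unfolding closure_subset_eq[symmetric]
    proof
      fix h assume h: "h \<in> closure G"
      define Dh where "Dh = (\<lambda>z. 1 * star h z + (-1) * inner h (g z))"
      have DL: "Dh \<in> L2 P" unfolding Dh_def by (intro L2_lin starL2 igL)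
      define X where "X = (\<integral>z. (Dh z)^2 \<partial>P)"
      have X0: "0 \<le> X" unfolding X_def by simp
      have Ig0: "0 \<le> Ig" unfolding Ig_def by simp
      have Xle: "X \<le> 2 * (C0^2 + Ig) * r^2" if r: "0 < r" for r
      proof -
        obtain h' where h': "h' \<in> G" "dist h' h < r" using h r closure_approachable by blast
        have nr: "norm (h - h') \<le> r" using h'(2) by (simp add: dist_norm norm_minus_commute)
        have ae: "AE z in P. (Dh z)^2 \<le> 2 * (star (h - h') z)^2 + 2 * ((norm (h - h'))^2 * (norm (g z))^2)"
          using h'(1) lin[of 1 h "-1" h'] unfolding G_def mem_Collect_eq
        proof eventually_elim
          case (elim z)
          have "Dh z = star (h - h') z + (- inner (h - h') (g z))"
            using elim unfolding Dh_def by (simp add: inner_diff_left algebra_simps)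
          then have "(Dh z)^2 \<le> 2 * (star (h - h') z)^2 + 2 * (inner (h - h') (g z))^2"
            using sq_sum_le[of "star (h - h') z" "- inner (h - h') (g z)"] by simp
          moreover have "\<bar>inner (h - h') (g z)\<bar> \<le> norm (h - h') * norm (g z)" by (rule Cauchy_Schwarz_ineq2)
          then have "\<bar>inner (h - h') (g z)\<bar>^2 \<le> (norm (h - h') * norm (g z))^2" by (intro power_mono) auto
          ultimately show ?case by (simp add: power_mult_distrib)
        qed
        have "X \<le> (\<integral>z. 2 * (star (h - h') z)^2 + 2 * ((norm (h - h'))^2 * (norm (g z))^2) \<partial>P)"
          unfolding X_def
        proof (rule integral_mono_AE)
          show "integrable P (\<lambda>z. (Dh z)^2)" using DL by (simp add: L2_def)
          show "integrable P (\<lambda>z. 2 * (star (h - h') z)^2 + 2 * ((norm (h - h'))^2 * (norm (g z))^2))"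
            using starL2[of "h - h'"] gi unfolding L2_def
            by (intro Bochner_Integration.integrable_add integrable_mult_right) auto
          show "AE z in P. (Dh z)^2 \<le> 2 * (star (h - h') z)^2 + 2 * ((norm (h - h'))^2 * (norm (g z))^2)"
            by (rule ae)
        qed
        also have "\<dots> = 2 * (\<integral>z. (star (h - h') z)^2 \<partial>P) + 2 * ((norm (h - h'))^2 * Ig)"
          using starL2[of "h - h'"] gi unfolding L2_def Ig_def
          by (subst Bochner_Integration.integral_add) (auto intro!: integrable_mult_right)
        also have "\<dots> \<le> 2 * (C0^2 * (norm (h - h'))^2) + 2 * ((norm (h - h'))^2 * Ig)"
          using bound[of "h - h'"] by simp
        also have "\<dots> = 2 * (C0^2 + Ig) * (norm (h - h'))^2" by (simp add: algebra_simps)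
        also have "\<dots> \<le> 2 * (C0^2 + Ig) * r^2"
          using nr Ig0 by (intro mult_left_mono power_mono) auto
        finally show ?thesis .
      qed
      have "X = 0"
      proof (rule ccontr)
        assume "X \<noteq> 0"
        then have Xp: "0 < X" using X0 by simp
        define r where "r = sqrt (X / (2 * (C0^2 + Ig) + 1))"
        have q: "0 < 2 * (C0^2 + Ig) + 1" using Ig0 by (simp add: add_nonneg_pos)
        have rp: "0 < r" unfolding r_def using Xp q by simp
        have r2: "r^2 = X / (2 * (C0^2 + Ig) + 1)" unfolding r_def using Xp q by simp
        have "2 * (C0^2 + Ig) * r^2 < (2 * (C0^2 + Ig) + 1) * r^2" using rp by simp
        also have "\<dots> = X" using r2 q by simp
        finally show False using Xle[OF rp] by simp
      qed
      then have "AE z in P. Dh z = 0" using L2_zero DL unfolding X_def by blast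
      then show "h \<in> G" unfolding G_def mem_Collect_eq Dh_def by eventually_elim simp
    qed
    have GU: "h \<in> G" for h
    proof -
      obtain p where p: "p \<in> G" "\<And>s. s \<in> G \<Longrightarrow> inner (h - p) s = 0"
        using proj_exists[OF Gsub Gcl, of h] by blast
      define r where "r = h - p"
      define r2 where "r2 = r - PH r"
      have r2G: "r2 \<in> G" unfolding r2_def by (intro Gperp PHperp)
      have "inner r r2 = 0" unfolding r_def using p(2) r2G by blast
      moreover have "inner (PH r) r2 = 0" unfolding r2_def using PHperp PH(1) by blast
      moreover have "inner (r - PH r) r2 = inner r r2 - inner (PH r) r2" by (rule inner_diff_left)
      moreover have "r - PH r = r2" by (simp add: r2_def)
      ultimately have "inner r2 r2 = 0" by simp
      then have "r2 = 0" by simp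
      then have rH: "r \<in> Hd" using PH(1)[of r] unfolding r2_def by simp
      have "evf r t = 0" for t
      proof -
        have "inner r (K t) = 0" unfolding r_def using p(2) GK by blast
        then show ?thesis using RK(6)[OF rH, of t] by (simp add: inner_commute)
      qed
      moreover have H0: "0 \<in> Hd" using RK(1) by (simp add: subspace_0)
      moreover have "evf 0 = (\<lambda>t. 0)" using RK(4)[OF H0 H0, of 0 0] by simp
      ultimately have "evf r = evf 0" by auto
      then have "r = 0" using RK(3) rH H0 by (auto dest: inj_onD)
      then show ?thesis using p(1) unfolding r_def by simp
    qed
    obtain H' where H': "countable H'"
      "AE z in P. \<forall>h. \<exists>hs. (\<forall>j. hs j \<in> H') \<and> hs \<longlonglongrightarrow> h \<and> (\<lambda>j. star (hs j) z) \<longlonglongrightarrow> star h z"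
      using assms(7) unfolding separable_process_def star_def by blast
    have "AE z in P. \<forall>h\<in>H'. star h z = inner h (g z)"
      using GU unfolding G_def mem_Collect_eq by (simp add: AE_ball_countable[OF H'(1)])
    then have "AE z in P. \<forall>h. star h z = inner h (g z)"
      using H'(2)
    proof eventually_elim
      case (elim z)
      show ?case
      proof
        fix h
        obtain hs where hs: "\<And>j. hs j \<in> H'" "hs \<longlonglongrightarrow> h" "(\<lambda>j. star (hs j) z) \<longlonglongrightarrow> star h z"
          using elim(2) by blast
        have "(\<lambda>j. inner (hs j) (g z)) \<longlonglongrightarrow> inner h (g z)"
          by (intro tendsto_inner hs(2) tendsto_const)
        moreover have "(\<lambda>j. star (hs j) z) = (\<lambda>j. inner (hs j) (g z))" using elim(1) hs(1) by auto
        ultimately show "star h z = inner h (g z)" using hs(3) LIMSEQ_unique by metis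
      qed
    qed
    then show "\<exists>\<phi>. has_EIF P dotnu_star \<phi>" unfolding has_EIF_def star_def by blast
  qed
  show ?thesis using part1 part2 by blast
qed

end
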